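(* Let $G=(V_G,E_G)$ be an undirected graph whose vertex set is partitioned among machines $M_1,\dots,M_m$ (every vertex is owned by exactly one machine), and let $G_t$ denote the partition owned by $M_t$. Let $P=(V_P,E_P)$ be a connected undirected query graph. Let $v$ be a data vertex owned by $M_t$ and $u\in V_P$ a query vertex. If $\mathrm{Span}_P(u)\le \mathrm{BD}_{G_t}(v)$, then there is no embedding $f$ of $P$ in $G$ such that $f(u)=v$ and $f(u')$ is not owned by $M_t$ for some $u'\in V_P$ with $u'\neq u$.
   Context: An embedding of $P$ in $G$ is an injective map $f:V_P\to V_G$ such that $(f(u_1),f(u_2))\in E_G$ for every $(u_1,u_2)\in E_P$. A vertex $w$ owned by $M_t$ is a border vertex of $G_t$ if some neighbour of $w$ in $G$ is owned by a machine other than $M_t$; $V^b_{G_t}$ is the set of border vertices of $G_t$. The border distance of $v$ is $\mathrm{BD}_{G_t}(v)=\min_{v'\in V^b_{G_t}} \mathrm{dist}(v,v')$, where $\mathrm{dist}$ is the shortest-path distance in $G$. The span of $u$ is $\mathrm{Span}_P(u)=\max_{u'\in V_P}\mathrm{dist}_P(u,u')$, the maximum shortest-path distance in $P$ from $u$ to any vertex of $P$. *)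

theory Defs
  imports Main "HOL-Library.Extended_Nat"
begin

text \<open>Graphs are given by a vertex set V and an edge relation E (a set of ordered pairs);
  undirectedness is expressed by symmetry of E.\<close>

definition walk :: "('v \<times> 'v) set \<Rightarrow> 'v list \<Rightarrow> bool" where
  "walk E xs \<longleftrightarrow> xs \<noteq> [] \<and> (\<forall>i. Suc i < length xs \<longrightarrow> (xs ! i, xs ! Suc i) \<in> E)"

text \<open>Shortest-path distance (number of edges); infinity if no path exists.\<close>
definition gdist :: "('v \<times> 'v) set \<Rightarrow> 'v \<Rightarrow> 'v \<Rightarrow> enat" where
  "gdist E x y = (INF xs \<in> {xs. walk E xs \<and> hd xs = x \<and> last xs = y}. enat (length xs - 1))"

definition graph_connected :: "'v set \<Rightarrow> ('v \<times> 'v) set \<Rightarrow> bool" where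
  "graph_connected V E \<longleftrightarrow> (\<forall>x\<in>V. \<forall>y\<in>V. gdist E x y < \<infinity>)"

definition embedding ::
  "'u set \<Rightarrow> ('u \<times> 'u) set \<Rightarrow> 'v set \<Rightarrow> ('v \<times> 'v) set \<Rightarrow> ('u \<Rightarrow> 'v) \<Rightarrow> bool" where
  "embedding VP EP VG EG f \<longleftrightarrow> inj_on f VP \<and> f ` VP \<subseteq> VG \<and>
     (\<forall>(u1, u2) \<in> EP. (f u1, f u2) \<in> EG)"

definition border :: "'v set \<Rightarrow> ('v \<times> 'v) set \<Rightarrow> ('v \<Rightarrow> nat) \<Rightarrow> nat \<Rightarrow> 'v set" where
  "border VG EG own t = {w \<in> VG. own w = t \<and> (\<exists>w'. (w, w') \<in> EG \<and> own w' \<noteq> t)}"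

text \<open>Border distance (infinity if there are no border vertices).\<close>
definition border_dist :: "'v set \<Rightarrow> ('v \<times> 'v) set \<Rightarrow> ('v \<Rightarrow> nat) \<Rightarrow> nat \<Rightarrow> 'v \<Rightarrow> enat" where
  "border_dist VG EG own t v = (INF w \<in> border VG EG own t. gdist EG v w)"

definition span :: "'u set \<Rightarrow> ('u \<times> 'u) set \<Rightarrow> 'u \<Rightarrow> enat" where
  "span VP EP u = (SUP u' \<in> VP. gdist EP u u')"

end

theory Submission
  imports Defs
begin

lemma gdist_le:
  assumes "walk E xs" "hd xs = x" "last xs = y"
  shows "gdist E x y \<le> enat (length xs - 1)"
  unfolding gdist_def using assms by (auto intro!: INF_lower2)

lemma gdist_attained:
  assumes "gdist E x y < \<infinity>"
  shows "\<exists>xs. walk E xs \<and> hd xs = x \<and> last xs = y \<and> gdist E x y = enat (length xs - 1)"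
proof -
  let ?A = "(\<lambda>xs. enat (length xs - 1)) ` {xs. walk E xs \<and> hd xs = x \<and> last xs = y}"
  have ne: "?A \<noteq> {}"
  proof
    assume "?A = {}"
    hence "{xs. walk E xs \<and> hd xs = x \<and> last xs = y} = {}" by blast
    hence "gdist E x y = \<infinity>" unfolding gdist_def by (metis image_empty Inf_empty top_enat_def)
    thus False using assms by simp
  qed
  have "gdist E x y = (LEAST z. z \<in> ?A)" unfolding gdist_def Inf_enat_def using ne by (simp only: if_False simp_thms)
  moreover have "(LEAST z. z \<in> ?A) \<in> ?A" proof -
    obtain z where "z \<in> ?A" using ne by blast
    thus ?thesis by (rule LeastI)
  qed
  ultimately show ?thesis by auto
qed

lemma walk_map:
  assumes "walk EP xs" "\<forall>(u1, u2) \<in> EP. (f u1, f u2) \<in> EG"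
  shows "walk EG (map f xs)"
  using assms unfolding walk_def by auto

lemma walk_take:
  assumes "walk E xs" "0 < j" "j \<le> length xs"
  shows "walk E (take j xs)"
  using assms unfolding walk_def by auto

theorem proposition1:
  fixes VG :: "'v set" and EG :: "('v \<times> 'v) set"
    and VP :: "'u set" and EP :: "('u \<times> 'u) set"
    and own :: "'v \<Rightarrow> nat" and m t :: nat and v :: 'v and u :: 'u
  assumes "finite VG" and "EG \<subseteq> VG \<times> VG" and "sym EG"
    and "\<forall>w\<in>VG. own w \<in> {1..m}"
    and "finite VP" and "EP \<subseteq> VP \<times> VP" and "sym EP"
    and "graph_connected VP EP"
    and "t \<in> {1..m}" and "v \<in> VG" and "own v = t" and "u \<in> VP"
    and "span VP EP u \<le> border_dist VG EG own t v"
  shows "\<not> (\<exists>f. embedding VP EP VG EG f \<and> f u = v \<and>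
                (\<exists>u'\<in>VP. u' \<noteq> u \<and> own (f u') \<noteq> t))"
proof
  assume "\<exists>f. embedding VP EP VG EG f \<and> f u = v \<and>
                (\<exists>u'\<in>VP. u' \<noteq> u \<and> own (f u') \<noteq> t)"
  then obtain f u' where emb: "embedding VP EP VG EG f" and fu: "f u = v"
    and u': "u' \<in> VP" "own (f u') \<noteq> t" by blast
  have fin: "gdist EP u u' < \<infinity>" using assms(8) \<open>u \<in> VP\<close> u' unfolding graph_connected_def by simp
  then obtain xs where xs: "walk EP xs" "hd xs = u" "last xs = u'"
    "gdist EP u u' = enat (length xs - 1)" using gdist_attained[OF fin] by blast
  have edges: "\<forall>(u1, u2) \<in> EP. (f u1, f u2) \<in> EG" using emb unfolding embedding_def by blast
  define ys where "ys = map f xs"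
  have ysw: "walk EG ys" unfolding ys_def using walk_map[OF xs(1) edges] .
  have xsne: "xs \<noteq> []" using xs(1) unfolding walk_def by auto
  have ys0: "ys ! 0 = v" using xsne xs(2) fu unfolding ys_def by (simp add: hd_conv_nth)
  have yslast: "ys ! (length ys - 1) = f u'" using xsne xs(3) unfolding ys_def
    by (simp add: last_conv_nth)
  have lenys: "length ys = length xs" unfolding ys_def by simp
  define j where "j = (LEAST i. own (ys ! i) \<noteq> t)"
  have ex: "own (ys ! (length ys - 1)) \<noteq> t" using yslast u' by simp
  have jle: "j \<le> length ys - 1" unfolding j_def using ex by (rule Least_le)
  have jown: "own (ys ! j) \<noteq> t" unfolding j_def using ex by (rule LeastI)
  have jpos: "0 < j" proof (rule ccontr)
    assume "\<not> 0 < j" hence "j = 0" by simp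
    thus False using jown ys0 \<open>own v = t\<close> by simp
  qed
  have "j - 1 < j" using jpos by simp
  hence prev: "own (ys ! (j - 1)) = t" using not_less_Least[of "j - 1" "\<lambda>i. own (ys ! i) \<noteq> t"]
    unfolding j_def by blast
  have lpos: "0 < length ys" using xsne lenys by simp
  have edge: "(ys ! (j - 1), ys ! j) \<in> EG" using ysw jpos jle lpos unfolding walk_def
    by (metis Suc_pred' diff_less le_less_trans less_one not_less)
  hence inVG: "ys ! (j - 1) \<in> VG" using assms(2) by auto
  have bord: "ys ! (j - 1) \<in> border VG EG own t" unfolding border_def using inVG prev edge jown by blast
  have tw: "walk EG (take j ys)" using walk_take[OF ysw jpos] jle lpos by simp
  have "hd (take j ys) = v" using ys0 jpos lpos by (simp add: hd_conv_nth)
  moreover have "last (take j ys) = ys ! (j - 1)" using jpos jle lpos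
    by (simp add: last_conv_nth min_def)
  ultimately have "gdist EG v (ys ! (j - 1)) \<le> enat (length (take j ys) - 1)"
    using gdist_le[OF tw] by blast
  also have "\<dots> = enat (j - 1)" using jle lpos by (simp add: min_def)
  finally have g1: "gdist EG v (ys ! (j - 1)) \<le> enat (j - 1)" .
  have "border_dist VG EG own t v \<le> enat (j - 1)"
    unfolding border_dist_def using bord g1 by (auto intro!: INF_lower2)
  moreover have "enat (j - 1) < enat (length xs - 1)" using jpos jle lenys by simp
  moreover have "gdist EP u u' \<le> span VP EP u" unfolding span_def using u' by (auto intro!: SUP_upper)
  ultimately show False using xs(4) assms(13) by (metis leD order.trans less_le_trans)
qed

end
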